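(* If $G=(V,E)$ is not observable and $|V|\ge 2$, then for any player algorithm (for the online learning problem with feedback graph $G$) there exists a sequence of loss functions $\ell_1,\ell_2,\dots:V\to[0,1]$ such that the player's expected regret after $T$ rounds is at least $\tfrac14 T$.
   Context: Let $G=(V,E)$ be a directed graph (self-loops allowed), $N^{\mathrm{in}}(i)=\{j:(j,i)\in E\}$, $N^{\mathrm{out}}(i)=\{j:(i,j)\in E\}$. $G$ is observable if $N^{\mathrm{in}}(i)\neq\emptyset$ for every $i\in V$. Online learning with feedback graph $G$: the environment fixes in advance losses $\ell_t:V\to[0,1]$; on round $t$ the player (possibly randomly) chooses $I_t\in V$ based on past observations, incurs $\ell_t(I_t)$, and observes only $\{(j,\ell_t(j)):j\in N^{\mathrm{out}}(I_t)\}$. The expected regret after $T$ rounds is $\mathbb{E}[\sum_{t=1}^T\ell_t(I_t)]-\min_{i\in V}\sum_{t=1}^T\ell_t(i)$. *)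

theory Defs
  imports "HOL-Probability.Probability"
begin

text \<open>Vertex set V is the finite type 'v (V = UNIV); the edge set is E :: ('v \<times> 'v) set.
  Rounds are numbered 1, 2, ...; the loss sequence is l :: nat \<Rightarrow> 'v \<Rightarrow> real
  (l t is the loss function of round t).\<close>

definition in_nbrs :: "('v \<times> 'v) set \<Rightarrow> 'v \<Rightarrow> 'v set" where
  "in_nbrs E i = {j. (j, i) \<in> E}"

definition out_nbrs :: "('v \<times> 'v) set \<Rightarrow> 'v \<Rightarrow> 'v set" where
  "out_nbrs E i = {j. (i, j) \<in> E}"

definition observable :: "('v \<times> 'v) set \<Rightarrow> bool" where
  "observable E \<longleftrightarrow> (\<forall>i. in_nbrs E i \<noteq> {})"

text \<open>What the player sees in a round: its own action and the partial loss function
  revealing l t j exactly for j in the out-neighbourhood of the chosen action.\<close>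
type_synonym 'v observation = "'v \<times> ('v \<Rightarrow> real option)"

definition observe :: "('v \<times> 'v) set \<Rightarrow> ('v \<Rightarrow> real) \<Rightarrow> 'v \<Rightarrow> 'v observation" where
  "observe E lt i = (i, (\<lambda>j. if j \<in> out_nbrs E i then Some (lt j) else None))"

type_synonym 'v player = "nat \<Rightarrow> 'v observation list \<Rightarrow> 'v pmf"

fun history :: "('v \<times> 'v) set \<Rightarrow> 'v player \<Rightarrow> (nat \<Rightarrow> 'v \<Rightarrow> real) \<Rightarrow> nat
                 \<Rightarrow> 'v observation list pmf" where
  "history E P l 0 = return_pmf []"
| "history E P l (Suc t) =
     bind_pmf (history E P l t)
       (\<lambda>h. map_pmf (\<lambda>i. h @ [observe E (l (Suc t)) i]) (P (Suc t) h))"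

definition expected_regret :: "('v::finite \<times> 'v) set \<Rightarrow> 'v player \<Rightarrow> (nat \<Rightarrow> 'v \<Rightarrow> real)
                                  \<Rightarrow> nat \<Rightarrow> real" where
  "expected_regret E P l T =
     measure_pmf.expectation (history E P l T)
        (\<lambda>h. \<Sum>k<T. l (Suc k) (fst (h ! k)))
     - Min (range (\<lambda>i. \<Sum>t=1..T. l t i))"

end

theory Submission
  imports Defs
begin

lemma hist_indep:
  assumes "\<And>t i. observe E (l t) i = observe E (l' t) i"
  shows "history E P l T = history E P l' T"
  by (induction T) (simp_all add: assms)

theorem theorem6:
  fixes E :: "('v::finite \<times> 'v) set"
  assumes "\<not> observable E"
    and "CARD('v) \<ge> 2"
  shows "\<forall>(P :: 'v player) (T :: nat). \<exists>l :: nat \<Rightarrow> 'v \<Rightarrow> real.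
           (\<forall>t i. 0 \<le> l t i \<and> l t i \<le> 1) \<and>
           expected_regret E P l T \<ge> real T / 4"
proof (intro allI)
  fix P :: "'v player" and T :: nat
  obtain a where a: "in_nbrs E a = {}" using assms(1) unfolding observable_def by auto
  obtain b :: 'v where b: "b \<noteq> a"
  proof -
    have "UNIV - {a} \<noteq> {}"
    proof
      assume "UNIV - {a} = {}"
      hence "(UNIV::'v set) = {a}" by auto
      hence "card (UNIV::'v set) = card {a}" by (rule arg_cong)
      hence "CARD('v) = 1" by simp
      thus False using assms(2) by simp
    qed
    thus ?thesis using that by auto
  qed
  define L :: "real \<Rightarrow> nat \<Rightarrow> 'v \<Rightarrow> real" where "L c t i = (if i = a then c else 1/2)" for c t i
  have noa: "a \<notin> out_nbrs E i" for i using a unfolding in_nbrs_def out_nbrs_def by auto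
  have obs: "observe E (L c t) i = observe E (L c' t) i" for c c' t i
    unfolding observe_def L_def using noa[of i] by (auto intro!: ext)
  define H where "H = history E P (L 0) T"
  have H: "history E P (L c) T = H" for c
    unfolding H_def by (rule hist_indep) (rule obs)
  define X where "X h = (\<Sum>k<T. if fst (h ! k) = a then 1 else 0 :: real)" for h :: "'v observation list"
  have Xb: "0 \<le> X h \<and> X h \<le> real T" for h
  proof -
    have "X h \<le> (\<Sum>k<T. 1)" unfolding X_def by (intro sum_mono) auto
    moreover have "0 \<le> X h" unfolding X_def by (intro sum_nonneg) auto
    ultimately show ?thesis by simp
  qed
  have intX: "integrable (measure_pmf H) X"
    by (rule measure_pmf.integrable_const_bound[where B="real T"]) (use Xb in auto)
  define p where "p = measure_pmf.expectation H X"
  have loss: "(\<Sum>k<T. L c (Suc k) (fst (h ! k))) = real T / 2 + (c - 1/2) * X h" for c h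
  proof -
    have "(\<Sum>k<T. L c (Suc k) (fst (h ! k))) = (\<Sum>k<T. 1/2 + (c - 1/2) * (if fst (h ! k) = a then 1 else 0))"
      unfolding L_def by (intro sum.cong) auto
    also have "\<dots> = real T / 2 + (c - 1/2) * X h"
      unfolding X_def by (simp add: sum.distrib sum_distrib_left)
    finally show ?thesis .
  qed
  have EL: "measure_pmf.expectation H (\<lambda>h. \<Sum>k<T. L c (Suc k) (fst (h ! k))) = real T / 2 + (c - 1/2) * p" for c
  proof -
    have "measure_pmf.expectation H (\<lambda>h. \<Sum>k<T. L c (Suc k) (fst (h ! k)))
        = measure_pmf.expectation H (\<lambda>h. real T / 2 + (c - 1/2) * X h)"
      by (simp add: loss)
    also have "\<dots> = real T / 2 + (c - 1/2) * p"
      using intX unfolding p_def by (simp add: Bochner_Integration.integral_add)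
    finally show ?thesis .
  qed
  have sumL: "(\<Sum>t=1..T. L c t i) = real T * (if i = a then c else 1/2)" for c i
    unfolding L_def by simp
  have R0: "expected_regret E P (L 0) T \<ge> real T / 2 - p / 2"
  proof -
    have "Min (range (\<lambda>i. \<Sum>t=1..T. L 0 t i)) \<le> (\<Sum>t=1..T. L 0 t a)"
      by (rule Min_le) auto
    moreover have "expected_regret E P (L 0) T = (real T / 2 - p / 2) - Min (range (\<lambda>i. \<Sum>t=1..T. L 0 t i))"
      unfolding expected_regret_def H EL by (simp add: algebra_simps)
    moreover have "(\<Sum>t=1..T. L 0 t a) = 0" using sumL[of 0 a] by simp
    ultimately show ?thesis by linarith
  qed
  have R1: "expected_regret E P (L 1) T \<ge> p / 2"
  proof -
    have "Min (range (\<lambda>i. \<Sum>t=1..T. L 1 t i)) \<le> (\<Sum>t=1..T. L 1 t b)"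
      by (rule Min_le) auto
    moreover have "expected_regret E P (L 1) T = (real T / 2 + p / 2) - Min (range (\<lambda>i. \<Sum>t=1..T. L 1 t i))"
      unfolding expected_regret_def H EL by (simp add: algebra_simps)
    moreover have "(\<Sum>t=1..T. L 1 t b) = real T / 2" using sumL[of 1 b] b by simp
    ultimately show ?thesis by linarith
  qed
  have bnd: "\<forall>t i. 0 \<le> L c t i \<and> L c t i \<le> 1" if "0 \<le> c" "c \<le> 1" for c
    using that unfolding L_def by auto
  show "\<exists>l :: nat \<Rightarrow> 'v \<Rightarrow> real. (\<forall>t i. 0 \<le> l t i \<and> l t i \<le> 1) \<and> expected_regret E P l T \<ge> real T / 4"
  proof (cases "p \<ge> real T / 2")
    case True
    thus ?thesis using R1 bnd[of 1] by (intro exI[of _ "L 1"]) auto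
  next
    case False
    thus ?thesis using R0 bnd[of 0] by (intro exI[of _ "L 0"]) auto
  qed
qed

end
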